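(* Let $R$ be a unital amenable affine algebra over a field $K$, with a fixed Følner exhaustion $\{W_n\}$ and ultralimit $\lim_\omega$. If $M$ is a submodule of a finitely generated left $R$-module $N$ with $M$ finitely generated, then $$\mathrm{rank}(N)\ge\mathrm{rank}(N/M)+\mathrm{rank}(M).$$
   Context: An affine algebra is a finitely generated associative algebra over $K$. A Følner exhaustion is a sequence of finite-dimensional $K$-subspaces $W_1\subseteq W_2\subseteq\cdots$ with $\bigcup_nW_n=R$ such that for every $r\in R$, $\lim_{n\to\infty}\dim_K(W_nr+W_n)/\dim_K(W_n)=1$; $R$ is amenable if one exists. $\lim_\omega$ is the ultralimit along an ultrafilter $\omega$ on $\mathbb N$ (a linear functional on bounded sequences with $\liminf\le\lim_\omega\le\limsup$, equal to the limit on convergent sequences). For a finitely generated module $P=\sum_{i=1}^sRy_i$, $\mathrm{rank}(P)=\lim_\omega\dim_K(\sum_iW_ny_i)/\dim_K(W_n)$ (independent of the generators). *)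

theory Defs
  imports Complex_Main
begin

definition K_algebra :: "('k::field \<Rightarrow> 'r::ring_1 \<Rightarrow> 'r) \<Rightarrow> bool" where
  "K_algebra sm \<longleftrightarrow> vector_space sm \<and>
     (\<forall>c a b. sm c (a * b) = sm c a * b \<and> sm c (a * b) = a * sm c b)"

definition affine_algebra :: "('k::field \<Rightarrow> 'r::ring_1 \<Rightarrow> 'r) \<Rightarrow> bool" where
  "affine_algebra sm \<longleftrightarrow> K_algebra sm \<and>
     (\<exists>G. finite G \<and> module.span sm {prod_list xs | xs. set xs \<subseteq> G} = UNIV)"

definition left_module :: "('r::ring_1 \<Rightarrow> 'n::ab_group_add \<Rightarrow> 'n) \<Rightarrow> bool" where
  "left_module act \<longleftrightarrow>
     (\<forall>a x y. act a (x + y) = act a x + act a y) \<and>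
     (\<forall>a b x. act (a + b) x = act a x + act b x) \<and>
     (\<forall>a b x. act (a * b) x = act a (act b x)) \<and>
     (\<forall>x. act 1 x = x)"

definition kscale :: "('k::field \<Rightarrow> 'r::ring_1 \<Rightarrow> 'r) \<Rightarrow> ('r \<Rightarrow> 'n::ab_group_add \<Rightarrow> 'n)
    \<Rightarrow> 'k \<Rightarrow> 'n \<Rightarrow> 'n" where
  "kscale sm act c x = act (sm c 1) x"

definition submodule :: "('r::ring_1 \<Rightarrow> 'n::ab_group_add \<Rightarrow> 'n) \<Rightarrow> 'n set \<Rightarrow> bool" where
  "submodule act P \<longleftrightarrow> 0 \<in> P \<and> (\<forall>x\<in>P. \<forall>y\<in>P. x + y \<in> P) \<and> (\<forall>r. \<forall>x\<in>P. act r x \<in> P)"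

definition gen_by :: "('r::ring_1 \<Rightarrow> 'n::ab_group_add \<Rightarrow> 'n) \<Rightarrow> 'n list \<Rightarrow> 'n set" where
  "gen_by act ys = {(\<Sum>i<length ys. act (r i) (ys ! i)) | r. True}"

definition fg_module :: "('r::ring_1 \<Rightarrow> 'n::ab_group_add \<Rightarrow> 'n) \<Rightarrow> 'n set \<Rightarrow> bool" where
  "fg_module act P \<longleftrightarrow> (\<exists>ys. P = gen_by act ys)"

definition sum_img :: "('r::ring_1 \<Rightarrow> 'n::ab_group_add \<Rightarrow> 'n) \<Rightarrow> 'r set \<Rightarrow> 'n list \<Rightarrow> 'n set" where
  "sum_img act W ys = {(\<Sum>i<length ys. act (w i) (ys ! i)) | w. \<forall>i<length ys. w i \<in> W}"

definition free_ultrafilter :: "nat filter \<Rightarrow> bool" where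
  "free_ultrafilter \<omega> \<longleftrightarrow> \<omega> \<noteq> bot \<and> \<omega> \<le> sequentially \<and>
     (\<forall>P. eventually P \<omega> \<or> eventually (\<lambda>x. \<not> P x) \<omega>)"

definition ulim :: "nat filter \<Rightarrow> (nat \<Rightarrow> real) \<Rightarrow> real" where
  "ulim \<omega> x = Lim \<omega> x"

definition folner_exhaustion :: "('k::field \<Rightarrow> 'r::ring_1 \<Rightarrow> 'r) \<Rightarrow> (nat \<Rightarrow> 'r set) \<Rightarrow> bool" where
  "folner_exhaustion sm W \<longleftrightarrow>
     (\<forall>n. module.subspace sm (W n) \<and> (\<exists>B. finite B \<and> W n = module.span sm B)) \<and>
     (\<forall>n. W n \<subseteq> W (Suc n)) \<and> (\<Union>n. W n) = UNIV \<and>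
     (\<forall>r. (\<lambda>n. real (vector_space.dim sm {a * r + b | a b. a \<in> W n \<and> b \<in> W n})
              / real (vector_space.dim sm (W n))) \<longlonglongrightarrow> 1)"

definition amenable :: "('k::field \<Rightarrow> 'r::ring_1 \<Rightarrow> 'r) \<Rightarrow> bool" where
  "amenable sm \<longleftrightarrow> (\<exists>W. folner_exhaustion sm W)"

definition rank_gen :: "('k::field \<Rightarrow> 'r::ring_1 \<Rightarrow> 'r) \<Rightarrow> ('r \<Rightarrow> 'n::ab_group_add \<Rightarrow> 'n)
    \<Rightarrow> (nat \<Rightarrow> 'r set) \<Rightarrow> nat filter \<Rightarrow> 'n list \<Rightarrow> real" where
  "rank_gen sm act W \<omega> ys =
     ulim \<omega> (\<lambda>n. real (vector_space.dim (kscale sm act) (sum_img act (W n) ys))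
                 / real (vector_space.dim sm (W n)))"

definition rank :: "('k::field \<Rightarrow> 'r::ring_1 \<Rightarrow> 'r) \<Rightarrow> ('r \<Rightarrow> 'n::ab_group_add \<Rightarrow> 'n)
    \<Rightarrow> (nat \<Rightarrow> 'r set) \<Rightarrow> nat filter \<Rightarrow> 'n set \<Rightarrow> real" where
  "rank sm act W \<omega> P = rank_gen sm act W \<omega> (SOME ys. P = gen_by act ys)"

end

theory Submission
  imports Defs
begin

context vector_space begin

lemma basis_fin:
  assumes "A \<subseteq> span F" "finite F"
  obtains A0 where "finite A0" "A0 \<subseteq> A" "independent A0" "A \<subseteq> span A0" "card A0 = dim A"
proof -
  obtain B where B: "B \<subseteq> A" "independent B" "A \<subseteq> span B" "card B = dim A"
    using basis_exists by blast
  have "finite B" using independent_span_bound[OF assms(2) B(2)] B(1) assms(1) by blast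
  then show ?thesis using B that by blast
qed

lemma fd_dim_mono:
  assumes "A \<subseteq> span B" "B \<subseteq> span F" "finite F"
  shows "dim A \<le> dim B"
proof -
  obtain B0 where B0: "finite B0" "B0 \<subseteq> B" "independent B0" "B \<subseteq> span B0" "card B0 = dim B"
    using basis_fin[OF assms(2,3)] by blast
  have "span B \<subseteq> span B0" using B0(4) span_minimal subspace_span by blast
  then have "A \<subseteq> span B0" using assms(1) by blast
  then show ?thesis using dim_le_card B0 by metis
qed

lemma complement:
  assumes "W \<subseteq> S" "S \<subseteq> span F" "finite F"
  obtains E where "finite E" "E \<subseteq> S" "card E + dim W \<le> dim S" "S \<subseteq> span (W \<union> E)"
proof -
  have WF: "W \<subseteq> span F" using assms by blast
  obtain B where B: "finite B" "B \<subseteq> W" "independent B" "W \<subseteq> span B" "card B = dim W"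
    using basis_fin[OF WF assms(3)] by blast
  obtain C where C: "B \<subseteq> C" "C \<subseteq> S" "independent C" "S \<subseteq> span C"
    using maximal_independent_subset_extend[of B S] B(2,3) assms(1) by blast
  have fC: "finite C" using independent_span_bound[OF assms(3) C(3)] C(2) assms(2) by blast
  have cC: "card C = dim S" using basis_card_eq_dim C by blast
  define E where "E = C - B"
  have "card E = card C - card B" unfolding E_def using C(1) B(1) by (simp add: card_Diff_subset)
  moreover have "card B \<le> card C" using C(1) fC card_mono by blast
  ultimately have "card E + dim W \<le> dim S" using cC B(5) by simp
  moreover have "S \<subseteq> span (W \<union> E)"
  proof -
    have "C \<subseteq> W \<union> E" unfolding E_def using B(2) by blast
    then have "span C \<subseteq> span (W \<union> E)" by (rule span_mono)
    then show ?thesis using C(4) by blast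
  qed
  moreover have "finite E" "E \<subseteq> S" unfolding E_def using fC C(2) by auto
  ultimately show ?thesis using that by blast
qed

end

lemma ka_vs: "K_algebra sm \<Longrightarrow> vector_space sm"
  by (simp add: K_algebra_def)

lemma ka_l: "K_algebra sm \<Longrightarrow> sm c (a * b) = sm c a * b"
  by (simp add: K_algebra_def)

lemma ka_r: "K_algebra sm \<Longrightarrow> sm c (a * b) = a * sm c b"
  unfolding K_algebra_def by metis

lemma lm_add: "left_module act \<Longrightarrow> act a (x + y) = act a x + act a y"
  by (simp add: left_module_def)
lemma lm_addl: "left_module act \<Longrightarrow> act (a + b) x = act a x + act b x"
  by (simp add: left_module_def)
lemma lm_mult: "left_module act \<Longrightarrow> act (a * b) x = act a (act b x)"
  by (simp add: left_module_def)
lemma lm_one: "left_module act \<Longrightarrow> act 1 x = x"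
  by (simp add: left_module_def)
lemma lm_zero: "left_module act \<Longrightarrow> act a 0 = 0"
  using lm_add[of act a 0 0] by simp
lemma lm_zerol: "left_module act \<Longrightarrow> act 0 x = 0"
  using lm_addl[of act 0 0 x] by simp
lemma lm_sum: assumes "left_module act" shows "act a (sum g S) = (\<Sum>i\<in>S. act a (g i))"
proof (cases "finite S")
  case True then show ?thesis by (induction S rule: finite_induct) (auto simp: lm_zero lm_add assms)
qed (simp add: lm_zero assms)
lemma lm_suml: assumes "left_module act" shows "act (sum g S) x = (\<Sum>i\<in>S. act (g i) x)"
proof (cases "finite S")
  case True then show ?thesis by (induction S rule: finite_induct) (auto simp: lm_zerol lm_addl assms)
qed (simp add: lm_zerol assms)

lemma ks_vs:
  assumes "K_algebra sm" "left_module act"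
  shows "vector_space (kscale sm act)"
proof -
  interpret R: vector_space sm using ka_vs[OF assms(1)] .
  have m: "sm a 1 * sm b 1 = sm (a * b) 1" for a b
    using ka_l[OF assms(1), of a 1 "sm b 1"] by simp
  show ?thesis
    by unfold_locales
      (auto simp: kscale_def lm_add[OF assms(2)] lm_addl[OF assms(2)] R.scale_left_distrib
         lm_mult[OF assms(2), symmetric] m lm_one[OF assms(2)])
qed

lemma L_lin:
  assumes "K_algebra sm" "left_module act"
  shows "module_hom sm (kscale sm act) (\<lambda>x. act x y)"
proof -
  interpret R: vector_space sm using ka_vs[OF assms(1)] .
  interpret N: vector_space "kscale sm act" using ks_vs[OF assms] .
  have e: "sm c 1 * x = sm c x" for c x using ka_l[OF assms(1), of c 1 x] by simp
  show ?thesis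
    apply unfold_locales
    by (auto simp: kscale_def lm_addl[OF assms(2)] lm_mult[OF assms(2), symmetric] e)
qed

lemma Rm_lin:
  assumes "K_algebra sm"
  shows "module_hom sm sm (\<lambda>x. x * r)"
proof -
  interpret R: vector_space sm using ka_vs[OF assms(1)] .
  show ?thesis
    apply unfold_locales
    by (auto simp: distrib_right ka_l[OF assms(1)])
qed

lemma f_lin:
  assumes "K_algebra sm" "left_module actN" "left_module actQ"
    "\<forall>x y. f (x + y) = f x + f y" "\<forall>r x. f (actN r x) = actQ r (f x)"
  shows "module_hom (kscale sm actN) (kscale sm actQ) f"
proof -
  interpret N: vector_space "kscale sm actN" using ks_vs[OF assms(1,2)] .
  interpret Q: vector_space "kscale sm actQ" using ks_vs[OF assms(1,3)] .
  show ?thesis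
    apply unfold_locales
    by (auto simp: kscale_def assms(4,5))
qed

lemma sum_split:
  "(\<Sum>k<m+n. h k) = (\<Sum>k<m. h k) + (\<Sum>k<n. h (m + k))" for m n :: nat
  by (induction n) (auto simp: add.assoc)

lemma si_mem: "x \<in> sum_img act W ys \<longleftrightarrow> (\<exists>w. x = (\<Sum>i<length ys. act (w i) (ys ! i)) \<and> (\<forall>i<length ys. w i \<in> W))"
  unfolding sum_img_def by blast

lemma si_subspace:
  assumes ka: "K_algebra sm" and lm: "left_module act" and W: "module.subspace sm W"
  shows "module.subspace (kscale sm act) (sum_img act W ys)"
proof -
  interpret R: vector_space sm using ka_vs[OF ka] .
  interpret N: vector_space "kscale sm act" using ks_vs[OF ka lm] .
  show ?thesis
  proof (rule N.subspaceI)
    show "0 \<in> sum_img act W ys" unfolding si_mem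
      by (rule exI[of _ "\<lambda>_. 0"]) (simp add: lm_zerol[OF lm] R.subspace_0[OF W])
  next
    fix x y assume "x \<in> sum_img act W ys" "y \<in> sum_img act W ys"
    then obtain w v where "x = (\<Sum>i<length ys. act (w i) (ys ! i))" "\<forall>i<length ys. w i \<in> W"
      "y = (\<Sum>i<length ys. act (v i) (ys ! i))" "\<forall>i<length ys. v i \<in> W" unfolding si_mem by blast
    then show "x + y \<in> sum_img act W ys" unfolding si_mem
      by (intro exI[of _ "\<lambda>i. w i + v i"])
        (simp add: lm_addl[OF lm] sum.distrib R.subspace_add[OF W])
  next
    fix c x assume "x \<in> sum_img act W ys"
    then obtain w where "x = (\<Sum>i<length ys. act (w i) (ys ! i))" "\<forall>i<length ys. w i \<in> W"
      unfolding si_mem by blast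
    moreover have "sm c 1 * a = sm c a" for a using ka_l[OF ka, of c 1 a] by simp
    ultimately show "kscale sm act c x \<in> sum_img act W ys" unfolding si_mem
      by (intro exI[of _ "\<lambda>i. sm c (w i)"])
        (simp add: kscale_def lm_sum[OF lm] lm_mult[OF lm, symmetric] R.subspace_scale[OF W])
  qed
qed

lemma si_single:
  assumes lm: "left_module act" and "u \<in> W" "0 \<in> W" "i < length ys"
  shows "act u (ys ! i) \<in> sum_img act W ys"
  unfolding si_mem
proof (intro exI[of _ "\<lambda>k. if k = i then u else 0"] conjI)
  have "(\<Sum>k<length ys. act (if k = i then u else 0) (ys ! k))
      = (\<Sum>k<length ys. if k = i then act u (ys ! i) else 0)"
    by (rule sum.cong) (auto simp: lm_zerol[OF lm])
  also have "\<dots> = act u (ys ! i)" using assms(4) by simp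
  finally show "act u (ys ! i) = (\<Sum>k<length ys. act (if k = i then u else 0) (ys ! k))" by simp
qed (use assms in auto)

lemma si_fin:
  assumes ka: "K_algebra sm" and lm: "left_module act" and W: "module.subspace sm W"
    and WB: "W \<subseteq> module.span sm B" and fB: "finite B"
  obtains F where "finite F" "card F \<le> length ys * vector_space.dim sm W"
    "sum_img act W ys \<subseteq> module.span (kscale sm act) F"
proof -
  interpret R: vector_space sm using ka_vs[OF ka] .
  interpret N: vector_space "kscale sm act" using ks_vs[OF ka lm] .
  obtain B0 where B0: "finite B0" "B0 \<subseteq> W" "R.independent B0" "W \<subseteq> R.span B0" "card B0 = R.dim W"
    using R.basis_fin[OF WB fB] by blast
  define F where "F = (\<Union>i<length ys. (\<lambda>x. act x (ys ! i)) ` B0)"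
  have "finite F" unfolding F_def using B0(1) by auto
  moreover have "card F \<le> length ys * R.dim W"
  proof -
    have "card F \<le> (\<Sum>i<length ys. card ((\<lambda>x. act x (ys ! i)) ` B0))"
      unfolding F_def by (rule card_UN_le) simp
    also have "\<dots> \<le> (\<Sum>i<length ys. card B0)"
      by (rule sum_mono) (rule card_image_le[OF B0(1)])
    finally show ?thesis using B0(5) by simp
  qed
  moreover have "sum_img act W ys \<subseteq> N.span F"
  proof
    fix x assume "x \<in> sum_img act W ys"
    then obtain w where x: "x = (\<Sum>i<length ys. act (w i) (ys ! i))" "\<forall>i<length ys. w i \<in> W"
      unfolding si_mem by blast
    have "act (w i) (ys ! i) \<in> N.span F" if i: "i < length ys" for i
    proof -
      have "w i \<in> R.span B0" using x(2) i B0(4) by blast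
      then have "act (w i) (ys ! i) \<in> (\<lambda>x. act x (ys ! i)) ` R.span B0" by blast
      also have "\<dots> = N.span ((\<lambda>x. act x (ys ! i)) ` B0)"
        using module_hom.span_image[OF L_lin[OF ka lm, of "ys ! i"]] by simp
      also have "\<dots> \<subseteq> N.span F" unfolding F_def by (rule N.span_mono) (use i in blast)
      finally show ?thesis .
    qed
    then show "x \<in> N.span F" unfolding x(1) by (intro N.span_sum) simp
  qed
  ultimately show ?thesis using that by blast
qed

lemma G:
  assumes ka: "K_algebra sm" and lm: "left_module act" and W: "module.subspace sm W"
    and WB: "W \<subseteq> module.span sm B" and fB: "finite B"
    and rr: "\<forall>j<length ys'. ys' ! j = (\<Sum>i<length ys. act (rr j i) (ys ! i))"
  shows "vector_space.dim (kscale sm act) (sum_img act W ys') \<le>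
     vector_space.dim (kscale sm act) (sum_img act W ys) +
     (\<Sum>j<length ys'. \<Sum>i<length ys.
        vector_space.dim sm {a * rr j i + b | a b. a \<in> W \<and> b \<in> W} - vector_space.dim sm W)"
proof -
  interpret R: vector_space sm using ka_vs[OF ka] .
  interpret N: vector_space "kscale sm act" using ks_vs[OF ka lm] .
  define S where "S j i = {a * rr j i + b | a b. a \<in> W \<and> b \<in> W}" for j i
  obtain B0 where B0: "finite B0" "B0 \<subseteq> W" "R.independent B0" "W \<subseteq> R.span B0" "card B0 = R.dim W"
    using R.basis_fin[OF WB fB] by blast
  have spW: "R.span W = W" using W by simp
  have SW: "W \<subseteq> S j i" for j i
  proof
    fix x assume "x \<in> W" then show "x \<in> S j i" unfolding S_def
      by (intro CollectI exI[of _ 0] exI[of _ x]) (simp add: R.subspace_0[OF W])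
  qed
  have SF: "S j i \<subseteq> R.span ((\<lambda>x. x * rr j i) ` B0 \<union> B0)" for j i
  proof
    fix x assume "x \<in> S j i"
    then obtain a b where ab: "x = a * rr j i + b" "a \<in> W" "b \<in> W" unfolding S_def by blast
    have "a * rr j i \<in> (\<lambda>x. x * rr j i) ` R.span B0" using ab(2) B0(4) by blast
    also have "\<dots> = R.span ((\<lambda>x. x * rr j i) ` B0)"
      using module_hom.span_image[OF Rm_lin[OF ka, of "rr j i"]] by simp
    also have "\<dots> \<subseteq> R.span ((\<lambda>x. x * rr j i) ` B0 \<union> B0)" by (rule R.span_mono) blast
    finally have 1: "a * rr j i \<in> R.span ((\<lambda>x. x * rr j i) ` B0 \<union> B0)" .
    have "b \<in> R.span ((\<lambda>x. x * rr j i) ` B0 \<union> B0)"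
      using ab(3) B0(4) R.span_mono[of B0 "(\<lambda>x. x * rr j i) ` B0 \<union> B0"] by blast
    then show "x \<in> R.span ((\<lambda>x. x * rr j i) ` B0 \<union> B0)" using 1 ab(1) R.span_add by simp
  qed
  define P where "P j i E \<longleftrightarrow> finite E \<and> card E + R.dim W \<le> R.dim (S j i) \<and> S j i \<subseteq> R.span (W \<union> E)" for j i E
  have ex: "\<exists>E. P j i E" for j i
  proof -
    obtain E where "finite E" "E \<subseteq> S j i" "card E + R.dim W \<le> R.dim (S j i)" "S j i \<subseteq> R.span (W \<union> E)"
      using R.complement[OF SW SF[of j i]] B0(1) by blast
    then show ?thesis unfolding P_def by blast
  qed
  define E where "E j i = (SOME E. P j i E)" for j i
  have PE: "P j i (E j i)" for j i unfolding E_def by (rule someI_ex[OF ex])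
  have E: "finite (E j i)" "card (E j i) + R.dim W \<le> R.dim (S j i)"
    "S j i \<subseteq> R.span (W \<union> E j i)" for j i
    using PE[of j i] unfolding P_def by auto
  define SI where "SI = sum_img act W ys"
  obtain F where F: "finite F" "SI \<subseteq> N.span F"
    using si_fin[OF ka lm W WB fB, of ys] unfolding SI_def by blast
  obtain A0 where A0: "finite A0" "A0 \<subseteq> SI" "N.independent A0" "SI \<subseteq> N.span A0" "card A0 = N.dim SI"
    using N.basis_fin[OF F(2) F(1)] by blast
  define T where "T = (\<Union>j<length ys'. \<Union>i<length ys. (\<lambda>x. act x (ys ! i)) ` E j i)"
  have fT: "finite T" unfolding T_def using E(1) by auto
  have cT: "card T \<le> (\<Sum>j<length ys'. \<Sum>i<length ys. R.dim (S j i) - R.dim W)"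
  proof -
    have "card T \<le> (\<Sum>j<length ys'. card (\<Union>i<length ys. (\<lambda>x. act x (ys ! i)) ` E j i))"
      unfolding T_def by (rule card_UN_le) simp
    also have "\<dots> \<le> (\<Sum>j<length ys'. \<Sum>i<length ys. card ((\<lambda>x. act x (ys ! i)) ` E j i))"
      by (intro sum_mono card_UN_le) simp
    also have "\<dots> \<le> (\<Sum>j<length ys'. \<Sum>i<length ys. R.dim (S j i) - R.dim W)"
    proof (intro sum_mono)
      fix j i
      have "card ((\<lambda>x. act x (ys ! i)) ` E j i) \<le> card (E j i)" by (rule card_image_le[OF E(1)])
      then show "card ((\<lambda>x. act x (ys ! i)) ` E j i) \<le> R.dim (S j i) - R.dim W"
        using E(2)[of j i] by linarith
    qed
    finally show ?thesis .
  qed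
  define Z where "Z = {x + y | x y. x \<in> SI \<and> y \<in> N.span T}"
  have SIsub: "N.subspace SI" unfolding SI_def by (rule si_subspace[OF ka lm W])
  have Zsub: "N.subspace Z" unfolding Z_def by (rule N.subspace_sums[OF SIsub N.subspace_span])
  have ZA: "Z \<subseteq> N.span (A0 \<union> T)"
  proof
    fix z assume "z \<in> Z"
    then obtain x y where xy: "z = x + y" "x \<in> SI" "y \<in> N.span T" unfolding Z_def by blast
    have "x \<in> N.span (A0 \<union> T)" using xy(2) A0(4) N.span_mono[of A0 "A0 \<union> T"] by blast
    moreover have "y \<in> N.span (A0 \<union> T)" using xy(3) N.span_mono[of T "A0 \<union> T"] by blast
    ultimately show "z \<in> N.span (A0 \<union> T)" using xy(1) N.span_add by simp
  qed
  have trm: "act (w * rr j i) (ys ! i) \<in> Z" if "w \<in> W" "j < length ys'" "i < length ys" for w j i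
  proof -
    have "w * rr j i \<in> S j i" unfolding S_def using that(1) R.subspace_0[OF W]
      by (intro CollectI exI[of _ w] exI[of _ 0]) simp
    then have "w * rr j i \<in> R.span (W \<union> E j i)" using E(3) by blast
    then obtain u e where ue: "w * rr j i = u + e" "u \<in> W" "e \<in> R.span (E j i)"
      unfolding R.span_Un spW by blast
    have 1: "act u (ys ! i) \<in> SI" unfolding SI_def
      by (rule si_single[OF lm ue(2) R.subspace_0[OF W] that(3)])
    have "act e (ys ! i) \<in> (\<lambda>x. act x (ys ! i)) ` R.span (E j i)" using ue(3) by blast
    also have "\<dots> = N.span ((\<lambda>x. act x (ys ! i)) ` E j i)"
      using module_hom.span_image[OF L_lin[OF ka lm, of "ys ! i"]] by simp
    also have "\<dots> \<subseteq> N.span T" unfolding T_def by (rule N.span_mono) (use that in blast)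
    finally have 2: "act e (ys ! i) \<in> N.span T" .
    show ?thesis unfolding ue(1) lm_addl[OF lm] Z_def using 1 2 by blast
  qed
  have main: "sum_img act W ys' \<subseteq> Z"
  proof
    fix x assume "x \<in> sum_img act W ys'"
    then obtain w where x: "x = (\<Sum>j<length ys'. act (w j) (ys' ! j))" "\<forall>j<length ys'. w j \<in> W"
      unfolding si_mem by blast
    have "act (w j) (ys' ! j) \<in> Z" if j: "j < length ys'" for j
    proof -
      have "act (w j) (ys' ! j) = (\<Sum>i<length ys. act (w j * rr j i) (ys ! i))"
        using rr j by (simp add: lm_sum[OF lm] lm_mult[OF lm])
      also have "\<dots> \<in> Z" using trm x(2) j by (intro N.subspace_sum[OF Zsub]) auto
      finally show ?thesis .
    qed
    then show "x \<in> Z" unfolding x(1) by (intro N.subspace_sum[OF Zsub]) auto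
  qed
  have "N.dim (sum_img act W ys') \<le> card (A0 \<union> T)"
    using main ZA A0(1) fT by (intro N.dim_le_card) auto
  also have "\<dots> \<le> card A0 + card T" by (rule card_Un_le)
  finally show ?thesis using A0(5) cT unfolding SI_def S_def by linarith
qed

lemma ulim_conv:
  assumes U: "free_ultrafilter \<omega>" and bd: "\<And>n. \<bar>x n\<bar> \<le> B"
  shows "(x \<longlongrightarrow> ulim \<omega> x) \<omega>"
proof -
  have nb: "\<omega> \<noteq> bot" and uf: "\<And>P. eventually P \<omega> \<or> eventually (\<lambda>x. \<not> P x) \<omega>"
    using U unfolding free_ultrafilter_def by auto
  define T where "T = {t. eventually (\<lambda>n. t \<le> x n) \<omega>}"
  have "- B \<le> x n" for n using bd[of n] by (simp add: abs_le_iff)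
  then have mT: "- B \<in> T" unfolding T_def by (auto intro: always_eventually)
  have ub: "t \<le> B" if "t \<in> T" for t
  proof (rule ccontr)
    assume "\<not> t \<le> B"
    moreover have "eventually (\<lambda>n. t \<le> x n) \<omega>" using that unfolding T_def by simp
    moreover have "x n \<le> B" for n using bd[of n] by (simp add: abs_le_iff)
    ultimately have "eventually (\<lambda>n. False) \<omega>"
      by (metis (mono_tags, lifting) eventually_mono order_trans)
    then show False using nb by (simp add: eventually_False)
  qed
  have bT: "bdd_above T" using ub by (auto simp: bdd_above_def)
  define L where "L = Sup T"
  have lim: "(x \<longlongrightarrow> L) \<omega>"
  proof (rule order_tendstoI)
    fix a assume "a < L"
    then obtain t where "t \<in> T" "a < t" unfolding L_def using less_cSup_iff[of T a] mT bT by blast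
    then show "eventually (\<lambda>n. a < x n) \<omega>" unfolding T_def by (auto elim: eventually_mono)
  next
    fix a assume a: "L < a"
    show "eventually (\<lambda>n. x n < a) \<omega>"
    proof (rule ccontr)
      assume "\<not> eventually (\<lambda>n. x n < a) \<omega>"
      then have "eventually (\<lambda>n. \<not> x n < a) \<omega>" using uf by blast
      then have "a \<in> T" unfolding T_def by (auto elim: eventually_mono)
      then have "a \<le> L" unfolding L_def using bT by (rule cSup_upper)
      then show False using a by simp
    qed
  qed
  have "ulim \<omega> x = L" unfolding ulim_def using nb lim by (intro tendsto_Lim) auto
  then show ?thesis using lim by simp
qed

lemma ulim_ineq:
  assumes U: "free_ultrafilter \<omega>" and ba: "\<And>n. \<bar>a n\<bar> \<le> Ba"
    and bb: "\<And>n. \<bar>b n\<bar> \<le> Bb" and bc: "\<And>n. \<bar>c n\<bar> \<le> Bc"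
    and e: "e \<longlonglongrightarrow> 0" and ineq: "\<And>n. b n + c n \<le> a n + e n"
  shows "ulim \<omega> b + ulim \<omega> c \<le> ulim \<omega> a"
proof -
  have nb: "\<omega> \<noteq> bot" and le: "\<omega> \<le> sequentially"
    using U unfolding free_ultrafilter_def by auto
  have e': "(e \<longlongrightarrow> 0) \<omega>" using e le by (rule tendsto_mono[rotated])
  have "((\<lambda>n. a n + e n - b n - c n) \<longlongrightarrow> ulim \<omega> a + 0 - ulim \<omega> b - ulim \<omega> c) \<omega>"
    by (intro tendsto_diff tendsto_add ulim_conv[OF U, of _ Ba] ulim_conv[OF U, of _ Bb]
        ulim_conv[OF U, of _ Bc] e' ba bb bc)
  moreover have "eventually (\<lambda>n. 0 \<le> a n + e n - b n - c n) \<omega>"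
    using ineq by (intro always_eventually) (auto simp: algebra_simps)
  ultimately have "0 \<le> ulim \<omega> a + 0 - ulim \<omega> b - ulim \<omega> c"
    using nb by (intro tendsto_lowerbound) auto
  then show ?thesis by simp
qed

lemma term_conv:
  assumes "(\<lambda>n. real (s n) / real (w n)) \<longlonglongrightarrow> 1"
  shows "(\<lambda>n. real (s n - w n) / real (w n)) \<longlonglongrightarrow> 0"
proof (rule tendsto_0_le[where K=1])
  show "(\<lambda>n. real (s n) / real (w n) - 1) \<longlonglongrightarrow> 0"
    using tendsto_diff[OF assms tendsto_const[of 1]] by simp
  show "\<forall>\<^sub>F n in sequentially. norm (real (s n - w n) / real (w n)) \<le> norm (real (s n) / real (w n) - 1) * 1"
  proof (intro always_eventually allI)
    fix n
    show "norm (real (s n - w n) / real (w n)) \<le> norm (real (s n) / real (w n) - 1) * 1"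
    proof (cases "w n = 0")
      case False
      show ?thesis
      proof (cases "w n \<le> s n")
        case True
        then have "real (s n - w n) / real (w n) = real (s n) / real (w n) - 1"
          using False by (simp add: of_nat_diff field_simps)
        then show ?thesis by simp
      qed simp
    qed simp
  qed
qed

lemma err_conv:
  assumes "folner_exhaustion sm W"
  shows "(\<lambda>n. real (\<Sum>j<J. \<Sum>i<I. vector_space.dim sm {a * rr j i + b | a b. a \<in> W n \<and> b \<in> W n}
             - vector_space.dim sm (W n)) / real (vector_space.dim sm (W n))) \<longlonglongrightarrow> 0"
proof -
  have F: "\<And>r. (\<lambda>n. real (vector_space.dim sm {a * r + b | a b. a \<in> W n \<and> b \<in> W n})
              / real (vector_space.dim sm (W n))) \<longlonglongrightarrow> 1"
    using assms unfolding folner_exhaustion_def by blast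
  have "(\<lambda>n. \<Sum>j<J. \<Sum>i<I. real (vector_space.dim sm {a * rr j i + b | a b. a \<in> W n \<and> b \<in> W n}
             - vector_space.dim sm (W n)) / real (vector_space.dim sm (W n))) \<longlonglongrightarrow> 0"
    by (intro tendsto_null_sum term_conv F)
  then show ?thesis by (simp add: sum_divide_distrib)
qed

lemma ratio_bound:
  assumes ka: "K_algebra sm" and lm: "left_module act" and W: "module.subspace sm W"
    and WB: "W \<subseteq> module.span sm B" and fB: "finite B"
  shows "\<bar>real (vector_space.dim (kscale sm act) (sum_img act W ys)) / real (vector_space.dim sm W)\<bar>
          \<le> real (length ys)"
proof -
  interpret N: vector_space "kscale sm act" using ks_vs[OF ka lm] .
  obtain F where F: "finite F" "card F \<le> length ys * vector_space.dim sm W"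
    "sum_img act W ys \<subseteq> N.span F" using si_fin[OF ka lm W WB fB] by blast
  have d: "N.dim (sum_img act W ys) \<le> length ys * vector_space.dim sm W"
    using N.dim_le_card[OF F(3) F(1)] F(2) by linarith
  show ?thesis
  proof (cases "vector_space.dim sm W = 0")
    case False
    have "real (N.dim (sum_img act W ys)) \<le> real (length ys) * real (vector_space.dim sm W)"
      using d by (metis of_nat_le_iff of_nat_mult)
    then show ?thesis using False by (simp add: divide_le_eq)
  qed simp
qed

lemma gen_mem: "x \<in> gen_by act ys \<longleftrightarrow> (\<exists>r. x = (\<Sum>i<length ys. act (r i) (ys ! i)))"
  unfolding gen_by_def by blast

lemma kernel_part:
  assumes ka: "K_algebra sm" and lmN: "left_module actN" and lmQ: "left_module actQ"
    and W: "module.subspace sm W" and WB: "W \<subseteq> module.span sm B" and fB: "finite B"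
    and fadd: "\<forall>x y. f (x + y) = f x + f y" and fact: "\<forall>r x. f (actN r x) = actQ r (f x)"
    and ker: "\<forall>i<length zs. f (zs ! i) = 0"
  shows "vector_space.dim (kscale sm actQ) (sum_img actQ W (map f ys))
       + vector_space.dim (kscale sm actN) (sum_img actN W zs)
     \<le> vector_space.dim (kscale sm actN) (sum_img actN W (ys @ zs))"
proof -
  interpret R: vector_space sm using ka_vs[OF ka] .
  interpret N: vector_space "kscale sm actN" using ks_vs[OF ka lmN] .
  interpret Q: vector_space "kscale sm actQ" using ks_vs[OF ka lmQ] .
  have fl: "module_hom (kscale sm actN) (kscale sm actQ) f" by (rule f_lin[OF ka lmN lmQ fadd fact])
  have f0: "f 0 = 0" using module_hom.zero[OF fl] .
  have fsum: "f (sum g A) = (\<Sum>a\<in>A. f (g a))" for g and A :: "nat set" using module_hom.sum[OF fl] .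
  have z0: "0 \<in> W" by (rule R.subspace_0[OF W])
  define V where "V = sum_img actN W (ys @ zs)"
  define K where "K = sum_img actN W zs"
  have KV: "K \<subseteq> V"
  proof
    fix x assume "x \<in> K"
    then obtain w where x: "x = (\<Sum>i<length zs. actN (w i) (zs ! i))" "\<forall>i<length zs. w i \<in> W"
      unfolding K_def si_mem by blast
    let ?w = "\<lambda>k. if k < length ys then 0 else w (k - length ys)"
    have e1: "x = (\<Sum>k<length (ys @ zs). actN (?w k) ((ys @ zs) ! k))"
      by (simp add: sum_split x(1) lm_zerol[OF lmN] nth_append)
    have e2: "\<forall>k<length (ys @ zs). ?w k \<in> W" using x(2) z0 by auto
    show "x \<in> V" unfolding V_def si_mem by (rule exI[of _ ?w]) (use e1 e2 in blast)
  qed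
  obtain F where F: "finite F" "V \<subseteq> N.span F"
    using si_fin[OF ka lmN W WB fB, of "ys @ zs"] unfolding V_def by blast
  obtain E where E: "finite E" "E \<subseteq> V" "card E + N.dim K \<le> N.dim V" "V \<subseteq> N.span (K \<union> E)"
    using N.complement[OF KV F(2) F(1)] by blast
  have fK: "f ` K \<subseteq> {0}"
  proof
    fix y assume "y \<in> f ` K"
    then obtain x where "y = f x" "x \<in> K" by blast
    then obtain w where x: "y = f (\<Sum>i<length zs. actN (w i) (zs ! i))"
      unfolding K_def si_mem by blast
    show "y \<in> {0}" unfolding x fsum using ker by (simp add: fact lm_zero[OF lmQ])
  qed
  have QV: "sum_img actQ W (map f ys) \<subseteq> f ` V"
  proof
    fix q assume "q \<in> sum_img actQ W (map f ys)"
    then obtain w where q: "q = (\<Sum>i<length ys. actQ (w i) (f (ys ! i)))" "\<forall>i<length ys. w i \<in> W"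
      unfolding si_mem by auto
    let ?w = "\<lambda>k. if k < length ys then w k else 0"
    have e1: "(\<Sum>i<length ys. actN (w i) (ys ! i)) = (\<Sum>k<length (ys @ zs). actN (?w k) ((ys @ zs) ! k))"
      by (simp add: sum_split lm_zerol[OF lmN] nth_append)
    have e2: "\<forall>k<length (ys @ zs). ?w k \<in> W" using q(2) z0 by auto
    have "(\<Sum>i<length ys. actN (w i) (ys ! i)) \<in> V" unfolding V_def si_mem
      by (rule exI[of _ ?w]) (use e1 e2 in blast)
    moreover have "f (\<Sum>i<length ys. actN (w i) (ys ! i)) = q" unfolding q(1) fsum by (simp add: fact)
    ultimately show "q \<in> f ` V" by blast
  qed
  have "f ` V \<subseteq> f ` N.span (K \<union> E)" using E(4) by blast
  also have "\<dots> = Q.span (f ` (K \<union> E))" using module_hom.span_image[OF fl] by simp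
  also have "\<dots> \<subseteq> Q.span (insert 0 (f ` E))" by (rule Q.span_mono) (use fK in blast)
  also have "\<dots> = Q.span (f ` E)" by simp
  finally have "sum_img actQ W (map f ys) \<subseteq> Q.span (f ` E)" using QV by blast
  then have "Q.dim (sum_img actQ W (map f ys)) \<le> card (f ` E)" using E(1) by (intro Q.dim_le_card) auto
  also have "\<dots> \<le> card E" using E(1) by (rule card_image_le)
  finally show ?thesis using E(3) unfolding V_def K_def by linarith
qed

theorem corollary2:
  fixes sm :: "'k::field \<Rightarrow> 'r::ring_1 \<Rightarrow> 'r"
    and W :: "nat \<Rightarrow> 'r set"
    and \<omega> :: "nat filter"
    and actN :: "'r \<Rightarrow> 'n::ab_group_add \<Rightarrow> 'n"
    and actQ :: "'r \<Rightarrow> 'q::ab_group_add \<Rightarrow> 'q"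
    and f :: "'n \<Rightarrow> 'q"
    and M :: "'n set"
  assumes "affine_algebra sm"
    and "amenable sm"
    and "folner_exhaustion sm W"
    and "free_ultrafilter \<omega>"
    and "left_module actN"
    and "fg_module actN (UNIV :: 'n set)"
    and "submodule actN M"
    and "fg_module actN M"
    and "left_module actQ"
    and "\<forall>x y. f (x + y) = f x + f y"
    and "\<forall>r x. f (actN r x) = actQ r (f x)"
    and "surj f"
    and "{x. f x = 0} = M"
  shows "rank sm actN W \<omega> UNIV \<ge> rank sm actQ W \<omega> UNIV + rank sm actN W \<omega> M"
proof -
  note fol = assms(3) and U = assms(4) and lmN = assms(5) and lmQ = assms(9)
    and fadd = assms(10) and fact = assms(11)
  have ka: "K_algebra sm" using assms(1) unfolding affine_algebra_def by blast
  have Wsub: "\<And>n. module.subspace sm (W n)" using fol unfolding folner_exhaustion_def by blast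
  have "\<forall>n. \<exists>B. finite B \<and> W n = module.span sm B" using fol unfolding folner_exhaustion_def by blast
  then obtain BB where BB: "\<And>n. finite (BB n)" "\<And>n. W n = module.span sm (BB n)" by metis
  have WB: "W n \<subseteq> module.span sm (BB n)" for n using BB(2) by blast
  define ys where "ys = (SOME ys. (UNIV :: 'n set) = gen_by actN ys)"
  have ys: "(UNIV :: 'n set) = gen_by actN ys"
    unfolding ys_def using assms(6) unfolding fg_module_def by (rule someI_ex)
  define zs where "zs = (SOME ys. M = gen_by actN ys)"
  have zs: "M = gen_by actN zs"
    unfolding zs_def using assms(8) unfolding fg_module_def by (rule someI_ex)
  have Qgen: "(UNIV :: 'q set) = gen_by actQ (map f ys)"
  proof -
    have "q \<in> gen_by actQ (map f ys)" for q
    proof -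
      obtain x where "q = f x" using assms(12) by (metis surj_def)
      moreover obtain r where "x = (\<Sum>i<length ys. actN (r i) (ys ! i))"
        using ys gen_mem by (metis UNIV_I)
      ultimately have "q = (\<Sum>i<length ys. actQ (r i) (map f ys ! i))"
        by (simp add: fact module_hom.sum[OF f_lin[OF ka lmN lmQ fadd fact]])
      then show ?thesis unfolding gen_mem by auto
    qed
    then show ?thesis by blast
  qed
  define qs where "qs = (SOME ys. (UNIV :: 'q set) = gen_by actQ ys)"
  have qs: "(UNIV :: 'q set) = gen_by actQ qs"
    unfolding qs_def using Qgen by (rule someI)
  have ker: "\<forall>i<length zs. f (zs ! i) = 0"
  proof (intro allI impI)
    fix i assume i: "i < length zs"
    have "(\<Sum>k<length zs. actN (if k = i then 1 else 0) (zs ! k))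
        = (\<Sum>k<length zs. if k = i then zs ! i else 0)"
      by (rule sum.cong) (auto simp: lm_one[OF lmN] lm_zerol[OF lmN])
    also have "\<dots> = zs ! i" using i by simp
    finally have "zs ! i = (\<Sum>k<length zs. actN (if k = i then 1 else 0) (zs ! k))" by simp
    then have "zs ! i \<in> M" unfolding zs gen_mem by (intro exI[of _ "\<lambda>k. if k = i then 1 else 0"])
    then show "f (zs ! i) = 0" using assms(13) by blast
  qed
  have "\<forall>j. \<exists>r. (ys @ zs) ! j = (\<Sum>i<length ys. actN (r i) (ys ! i))"
    using ys gen_mem by (metis UNIV_I)
  then obtain rr1 where rr1: "\<forall>j. (ys @ zs) ! j = (\<Sum>i<length ys. actN (rr1 j i) (ys ! i))" by metis
  have "\<forall>j. \<exists>r. qs ! j = (\<Sum>i<length (map f ys). actQ (r i) (map f ys ! i))"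
    using Qgen gen_mem by (metis UNIV_I)
  then obtain rr2 where rr2: "\<forall>j. qs ! j = (\<Sum>i<length (map f ys). actQ (rr2 j i) (map f ys ! i))" by metis
  define wd where "wd n = real (vector_space.dim sm (W n))" for n
  define a where "a n = real (vector_space.dim (kscale sm actN) (sum_img actN (W n) ys)) / wd n" for n
  define b where "b n = real (vector_space.dim (kscale sm actQ) (sum_img actQ (W n) qs)) / wd n" for n
  define c where "c n = real (vector_space.dim (kscale sm actN) (sum_img actN (W n) zs)) / wd n" for n
  define D1 where "D1 n = (\<Sum>j<length (ys @ zs). \<Sum>i<length ys.
        vector_space.dim sm {x * rr1 j i + y | x y. x \<in> W n \<and> y \<in> W n} - vector_space.dim sm (W n))" for n
  define D2 where "D2 n = (\<Sum>j<length qs. \<Sum>i<length (map f ys).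
        vector_space.dim sm {x * rr2 j i + y | x y. x \<in> W n \<and> y \<in> W n} - vector_space.dim sm (W n))" for n
  define e where "e n = real (D1 n) / wd n + real (D2 n) / wd n" for n
  have e: "e \<longlonglongrightarrow> 0"
    unfolding e_def D1_def D2_def wd_def
    using tendsto_add[OF err_conv[OF fol] err_conv[OF fol]] by simp
  have ineq: "b n + c n \<le> a n + e n" for n
  proof -
    have A: "vector_space.dim (kscale sm actN) (sum_img actN (W n) (ys @ zs))
        \<le> vector_space.dim (kscale sm actN) (sum_img actN (W n) ys) + D1 n"
      unfolding D1_def by (rule G[OF ka lmN Wsub WB BB(1)]) (use rr1 in blast)
    have B: "vector_space.dim (kscale sm actQ) (sum_img actQ (W n) qs)
        \<le> vector_space.dim (kscale sm actQ) (sum_img actQ (W n) (map f ys)) + D2 n"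
      unfolding D2_def by (rule G[OF ka lmQ Wsub WB BB(1)]) (use rr2 in blast)
    have C: "vector_space.dim (kscale sm actQ) (sum_img actQ (W n) (map f ys))
       + vector_space.dim (kscale sm actN) (sum_img actN (W n) zs)
       \<le> vector_space.dim (kscale sm actN) (sum_img actN (W n) (ys @ zs))"
      by (rule kernel_part[OF ka lmN lmQ Wsub WB BB(1) fadd fact ker])
    have "real (vector_space.dim (kscale sm actQ) (sum_img actQ (W n) qs))
        + real (vector_space.dim (kscale sm actN) (sum_img actN (W n) zs))
        \<le> real (vector_space.dim (kscale sm actN) (sum_img actN (W n) ys)) + real (D1 n) + real (D2 n)"
      using A B C by linarith
    then have "(real (vector_space.dim (kscale sm actQ) (sum_img actQ (W n) qs))
        + real (vector_space.dim (kscale sm actN) (sum_img actN (W n) zs))) / wd n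
        \<le> (real (vector_space.dim (kscale sm actN) (sum_img actN (W n) ys)) + real (D1 n) + real (D2 n)) / wd n"
      by (rule divide_right_mono) (simp add: wd_def)
    then show ?thesis unfolding a_def b_def c_def e_def by (simp add: add_divide_distrib)
  qed
  have ba: "\<bar>a n\<bar> \<le> real (length ys)" for n
    unfolding a_def wd_def by (rule ratio_bound[OF ka lmN Wsub WB BB(1)])
  have bb: "\<bar>b n\<bar> \<le> real (length qs)" for n
    unfolding b_def wd_def by (rule ratio_bound[OF ka lmQ Wsub WB BB(1)])
  have bc: "\<bar>c n\<bar> \<le> real (length zs)" for n
    unfolding c_def wd_def by (rule ratio_bound[OF ka lmN Wsub WB BB(1)])
  have "ulim \<omega> b + ulim \<omega> c \<le> ulim \<omega> a"
    by (rule ulim_ineq[OF U ba bb bc e ineq])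
  moreover have "rank sm actN W \<omega> UNIV = ulim \<omega> a"
    unfolding rank_def rank_gen_def ys_def[symmetric] a_def wd_def ..
  moreover have "rank sm actQ W \<omega> UNIV = ulim \<omega> b"
    unfolding rank_def rank_gen_def qs_def[symmetric] b_def wd_def ..
  moreover have "rank sm actN W \<omega> M = ulim \<omega> c"
    unfolding rank_def rank_gen_def zs_def[symmetric] c_def wd_def ..
  ultimately show ?thesis by simp
qed


end
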